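(* Let $A$ be a popular arborescence of $G$ and let $\mathcal D=\{D_1,\dots,D_q\}$ be a chain with $\emptyset\subsetneq D_1\subsetneq\cdots\subsetneq D_q=E$, $A\subseteq E(\mathcal D)$, and $\mathrm{span}(A\cap D_i)=D_i$ for all $i$. Then at any moment of the execution of Algorithm 1 on $G$ (for any choices of the lexicographically maximal branchings), the current multichain $\mathcal C=\{C_1,\dots,C_p\}$ satisfies $p\le q$ and $D_i\subseteq C_i$ for $i=1,\dots,p$.
   Context: $G=(V\cup\{r\},E)$ is a directed graph, $r$ has no incoming edge, each $v\in V$ has a partial order $\succ_v$ on its incoming edges $\delta(v)$, $n=|V|$. An arborescence is $A\subseteq E$ with no undirected cycle and exactly one edge $A(v)\in\delta(v)$ per $v\in V$; a branching is $I\subseteq E$ with no undirected cycle and $|I\cap\delta(v)|\le1$ for all $v$. $A$ is popular if $\phi(A,A')\ge\phi(A',A)$ for all arborescences $A'$, with $\phi(A,A')$ the number of $v$ having $A(v)\succ_v A'(v)$. $\mathrm{rank}$ is the graphic matroid rank and $\mathrm{span}(S)=\{e:\mathrm{rank}(S\cup\{e\})=\mathrm{rank}(S)\}$. A multichain is an indexed family $C_1\subseteq\cdots\subseteq C_p$ of subsets of $E$ (a chain if all inclusions are strict). For a multichain with $C_p=E$ and $C_0=\emptyset$: $\mathrm{lev}_{\mathcal C}(e)$ is the index $i$ with $e\in C_i\setminus C_{i-1}$; $\mathrm{lev}^*_{\mathcal C}(v)=\max_{e\in\delta(v)}\mathrm{lev}_{\mathcal C}(e)$; $E(\mathcal C)$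 is the set of $e\in\delta(v)$ ($v\in V$) such that either (i) $\mathrm{lev}_{\mathcal C}(e)=\mathrm{lev}^*_{\mathcal C}(v)$ and no $e'\in\delta(v)$ of that level has $e'\succ_v e$, or (ii) $\mathrm{lev}_{\mathcal C}(e)=\mathrm{lev}^*_{\mathcal C}(v)-1$, no $e'\in\delta(v)$ of that level has $e'\succ_v e$, and $e\succ_v f$ for all $f\in\delta(v)$ of level $\mathrm{lev}^*_{\mathcal C}(v)$. Algorithm 1: set $p=1$, $C_1=E$. While $p\le n$: compute $E(\mathcal C)$; find a branching $I\subseteq E(\mathcal C)$ lexicographically maximizing $(|I\cap C_1|,\dots,|I\cap C_p|)$; if $|I\cap C_i|=\mathrm{rank}(C_i)$ for all $i$, return $I$; otherwise let $k$ be the minimum index with $|I\cap C_k|<\mathrm{rank}(C_k)$, set $C_k\leftarrow\mathrm{span}(I\cap C_k)$, and if $k=p$, set $p\leftarrow p+1$ and add $C_p=E$ to $\mathcal C$. If the loop ends, report that $G$ has no popular arborescence. *)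

theory Defs
  imports Main
begin

text \<open>Directed multigraph: vertex set V plus root r, edge set E (abstract edge type),
  tail function tail and head function head. pref v e f means e \<succ>_v f.\<close>

definition digraph_wf ::
  "'v set \<Rightarrow> 'v \<Rightarrow> 'e set \<Rightarrow> ('e \<Rightarrow> 'v) \<Rightarrow> ('e \<Rightarrow> 'v) \<Rightarrow> ('v \<Rightarrow> 'e \<Rightarrow> 'e \<Rightarrow> bool) \<Rightarrow> bool" where
  "digraph_wf V r E tail head pref \<longleftrightarrow>
     finite V \<and> finite E \<and> r \<notin> V \<and>
     (\<forall>e\<in>E. tail e \<in> insert r V \<and> head e \<in> V) \<and>
     (\<forall>v\<in>V. (\<forall>e\<in>E. head e = v \<longrightarrow> \<not> pref v e e) \<and>
             (\<forall>e\<in>E. \<forall>f\<in>E. \<forall>g\<in>E. head e = v \<and> head f = v \<and> head g = v \<longrightarrow>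
                  pref v e f \<longrightarrow> pref v f g \<longrightarrow> pref v e g))"

definition delta :: "'e set \<Rightarrow> ('e \<Rightarrow> 'v) \<Rightarrow> 'v \<Rightarrow> 'e set" where
  "delta E head v = {e \<in> E. head e = v}"

text \<open>Undirected cycle: distinct edges es = e_0..e_(k-1), distinct vertices vs = v_0..v_(k-1),
  k \<ge> 1, edge e_i joins v_i and v_((i+1) mod k) (k = 1: a loop).\<close>
definition undirected_cycle :: "('e \<Rightarrow> 'v) \<Rightarrow> ('e \<Rightarrow> 'v) \<Rightarrow> 'e list \<Rightarrow> 'v list \<Rightarrow> bool" where
  "undirected_cycle tail head es vs \<longleftrightarrow>
     es \<noteq> [] \<and> length vs = length es \<and> distinct es \<and> distinct vs \<and>
     (\<forall>i < length es. {tail (es ! i), head (es ! i)} = {vs ! i, vs ! ((i + 1) mod length es)})"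

definition no_cycle :: "('e \<Rightarrow> 'v) \<Rightarrow> ('e \<Rightarrow> 'v) \<Rightarrow> 'e set \<Rightarrow> bool" where
  "no_cycle tail head F \<longleftrightarrow> \<not> (\<exists>es vs. set es \<subseteq> F \<and> undirected_cycle tail head es vs)"

definition arborescence ::
  "'v set \<Rightarrow> 'e set \<Rightarrow> ('e \<Rightarrow> 'v) \<Rightarrow> ('e \<Rightarrow> 'v) \<Rightarrow> 'e set \<Rightarrow> bool" where
  "arborescence V E tail head A \<longleftrightarrow>
     A \<subseteq> E \<and> no_cycle tail head A \<and> (\<forall>v\<in>V. card (A \<inter> delta E head v) = 1)"

definition branching ::
  "'v set \<Rightarrow> 'e set \<Rightarrow> ('e \<Rightarrow> 'v) \<Rightarrow> ('e \<Rightarrow> 'v) \<Rightarrow> 'e set \<Rightarrow> bool" where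
  "branching V E tail head I \<longleftrightarrow>
     I \<subseteq> E \<and> no_cycle tail head I \<and> (\<forall>v\<in>V. card (I \<inter> delta E head v) \<le> 1)"

definition arb_edge :: "'e set \<Rightarrow> ('e \<Rightarrow> 'v) \<Rightarrow> 'e set \<Rightarrow> 'v \<Rightarrow> 'e" where
  "arb_edge E head A v = (THE e. e \<in> A \<inter> delta E head v)"

definition phi ::
  "'v set \<Rightarrow> 'e set \<Rightarrow> ('e \<Rightarrow> 'v) \<Rightarrow> ('v \<Rightarrow> 'e \<Rightarrow> 'e \<Rightarrow> bool) \<Rightarrow> 'e set \<Rightarrow> 'e set \<Rightarrow> nat" where
  "phi V E head pref A A' = card {v \<in> V. pref v (arb_edge E head A v) (arb_edge E head A' v)}"

definition popular ::
  "'v set \<Rightarrow> 'e set \<Rightarrow> ('e \<Rightarrow> 'v) \<Rightarrow> ('e \<Rightarrow> 'v) \<Rightarrow> ('v \<Rightarrow> 'e \<Rightarrow> 'e \<Rightarrow> bool) \<Rightarrow> 'e set \<Rightarrow> bool" where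
  "popular V E tail head pref A \<longleftrightarrow>
     arborescence V E tail head A \<and>
     (\<forall>A'. arborescence V E tail head A' \<longrightarrow> phi V E head pref A' A \<le> phi V E head pref A A')"

definition grank :: "('e \<Rightarrow> 'v) \<Rightarrow> ('e \<Rightarrow> 'v) \<Rightarrow> 'e set \<Rightarrow> nat" where
  "grank tail head S = Max (card ` {F. F \<subseteq> S \<and> no_cycle tail head F})"

definition gspan :: "'e set \<Rightarrow> ('e \<Rightarrow> 'v) \<Rightarrow> ('e \<Rightarrow> 'v) \<Rightarrow> 'e set \<Rightarrow> 'e set" where
  "gspan E tail head S = {e \<in> E. grank tail head (insert e S) = grank tail head S}"

text \<open>Multichains are lists Cs; C_i = Cs ! (i - 1) for 1 \<le> i \<le> length Cs, and C_0 = {}.\<close>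
definition cset :: "'e set list \<Rightarrow> nat \<Rightarrow> 'e set" where
  "cset Cs i = (if i = 0 then {} else Cs ! (i - 1))"

definition multichain :: "'e set list \<Rightarrow> bool" where
  "multichain Cs \<longleftrightarrow> (\<forall>i. Suc i < length Cs \<longrightarrow> Cs ! i \<subseteq> Cs ! Suc i)"

definition strict_chain :: "'e set list \<Rightarrow> bool" where
  "strict_chain Cs \<longleftrightarrow> (\<forall>i. Suc i < length Cs \<longrightarrow> Cs ! i \<subset> Cs ! Suc i)"

definition lev :: "'e set list \<Rightarrow> 'e \<Rightarrow> nat" where
  "lev Cs e = (THE i. 1 \<le> i \<and> i \<le> length Cs \<and> e \<in> cset Cs i - cset Cs (i - 1))"

definition levstar :: "'e set \<Rightarrow> ('e \<Rightarrow> 'v) \<Rightarrow> 'e set list \<Rightarrow> 'v \<Rightarrow> nat" where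
  "levstar E head Cs v = Max (lev Cs ` delta E head v)"

definition ECs ::
  "'v set \<Rightarrow> 'e set \<Rightarrow> ('e \<Rightarrow> 'v) \<Rightarrow> ('v \<Rightarrow> 'e \<Rightarrow> 'e \<Rightarrow> bool) \<Rightarrow> 'e set list \<Rightarrow> 'e set" where
  "ECs V E head pref Cs = {e \<in> E. head e \<in> V \<and>
     ((lev Cs e = levstar E head Cs (head e) \<and>
        \<not> (\<exists>e'\<in>delta E head (head e). lev Cs e' = lev Cs e \<and> pref (head e) e' e))
      \<or>
      (lev Cs e = levstar E head Cs (head e) - 1 \<and>
        \<not> (\<exists>e'\<in>delta E head (head e). lev Cs e' = lev Cs e \<and> pref (head e) e' e) \<and>
        (\<forall>f\<in>delta E head (head e). lev Cs f = levstar E head Cs (head e) \<longrightarrow> pref (head e) e f)))}"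

definition lex_less :: "nat list \<Rightarrow> nat list \<Rightarrow> bool" where
  "lex_less xs ys \<longleftrightarrow> (\<exists>k < length xs. take k xs = take k ys \<and> xs ! k < ys ! k)"

definition count_vec :: "'e set list \<Rightarrow> 'e set \<Rightarrow> nat list" where
  "count_vec Cs I = map (\<lambda>C. card (I \<inter> C)) Cs"

definition lexmax_branching ::
  "'v set \<Rightarrow> 'e set \<Rightarrow> ('e \<Rightarrow> 'v) \<Rightarrow> ('e \<Rightarrow> 'v) \<Rightarrow> ('v \<Rightarrow> 'e \<Rightarrow> 'e \<Rightarrow> bool) \<Rightarrow> 'e set list \<Rightarrow> 'e set \<Rightarrow> bool" where
  "lexmax_branching V E tail head pref Cs I \<longleftrightarrow>
     branching V E tail head I \<and> I \<subseteq> ECs V E head pref Cs \<and>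
     (\<forall>J. branching V E tail head J \<and> J \<subseteq> ECs V E head pref Cs \<longrightarrow>
          \<not> lex_less (count_vec Cs I) (count_vec Cs J))"

text \<open>One (non-returning) iteration of Algorithm 1 from multichain Cs to Cs'.\<close>
definition alg_step ::
  "'v set \<Rightarrow> 'e set \<Rightarrow> ('e \<Rightarrow> 'v) \<Rightarrow> ('e \<Rightarrow> 'v) \<Rightarrow> ('v \<Rightarrow> 'e \<Rightarrow> 'e \<Rightarrow> bool) \<Rightarrow> 'e set list \<Rightarrow> 'e set list \<Rightarrow> bool" where
  "alg_step V E tail head pref Cs Cs' \<longleftrightarrow>
     length Cs \<le> card V \<and>
     (\<exists>I k. lexmax_branching V E tail head pref Cs I \<and>
        1 \<le> k \<and> k \<le> length Cs \<and>
        card (I \<inter> cset Cs k) < grank tail head (cset Cs k) \<and>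
        (\<forall>i. 1 \<le> i \<and> i < k \<longrightarrow> card (I \<inter> cset Cs i) = grank tail head (cset Cs i)) \<and>
        Cs' = (let Cs1 = Cs[k - 1 := gspan E tail head (I \<inter> cset Cs k)]
               in if k = length Cs then Cs1 @ [E] else Cs1))"

inductive alg_reach ::
  "'v set \<Rightarrow> 'e set \<Rightarrow> ('e \<Rightarrow> 'v) \<Rightarrow> ('e \<Rightarrow> 'v) \<Rightarrow> ('v \<Rightarrow> 'e \<Rightarrow> 'e \<Rightarrow> bool) \<Rightarrow> 'e set list \<Rightarrow> bool"
  for V E tail head pref where
  init: "alg_reach V E tail head pref [E]"
| step: "alg_reach V E tail head pref Cs \<Longrightarrow> alg_step V E tail head pref Cs Cs' \<Longrightarrow> alg_reach V E tail head pref Cs'"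

end

theory Submission
  imports Defs
begin

definition ur :: "('e \<Rightarrow> 'v) \<Rightarrow> ('e \<Rightarrow> 'v) \<Rightarrow> 'e set \<Rightarrow> ('v \<times> 'v) set" where
  "ur tail head F = {(x,y). \<exists>f\<in>F. (tail f = x \<and> head f = y) \<or> (tail f = y \<and> head f = x)}"

definition conn :: "('e \<Rightarrow> 'v) \<Rightarrow> ('e \<Rightarrow> 'v) \<Rightarrow> 'e set \<Rightarrow> 'v \<Rightarrow> 'v \<Rightarrow> bool" where
  "conn tail head F x y \<longleftrightarrow> (x,y) \<in> (ur tail head F)\<^sup>*"

lemma conn_refl[simp]: "conn tail head F x x"
  by (simp add: conn_def)

lemma conn_trans: "conn tail head F x y \<Longrightarrow> conn tail head F y z \<Longrightarrow> conn tail head F x z"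
  unfolding conn_def by (meson rtrancl_trans)

lemma ur_sym: "sym (ur tail head F)"
  unfolding ur_def sym_def by blast

lemma conn_sym: "conn tail head F x y \<Longrightarrow> conn tail head F y x"
  unfolding conn_def using sym_rtrancl[OF ur_sym[of tail head F]] unfolding sym_def by blast

lemma conn_edge: "f \<in> F \<Longrightarrow> conn tail head F (tail f) (head f)"
  unfolding conn_def ur_def by (rule r_into_rtrancl) blast

lemma conn_edge': "f \<in> F \<Longrightarrow> conn tail head F (head f) (tail f)"
  using conn_edge conn_sym by metis

lemma conn_edge2: "f \<in> F \<Longrightarrow> {tail f, head f} = {x, y} \<Longrightarrow> conn tail head F x y"
  by (metis conn_edge conn_edge' doubleton_eq_iff)

lemma conn_lift:
  assumes "\<And>s. s \<in> S \<Longrightarrow> conn tail head T (tail s) (head s)"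
    and "conn tail head S x y"
  shows "conn tail head T x y"
proof -
  have "(x,y) \<in> (ur tail head S)\<^sup>*" using assms(2) by (simp add: conn_def)
  then show ?thesis
  proof (induct rule: rtrancl_induct)
    case base then show ?case by simp
  next
    case (step y z)
    from step(2) obtain f where f: "f \<in> S" "(tail f = y \<and> head f = z) \<or> (tail f = z \<and> head f = y)"
      unfolding ur_def by blast
    have "conn tail head T y z" using assms(1)[OF f(1)] f(2) conn_sym by metis
    then show ?case using step(3) conn_trans by metis
  qed
qed

lemma conn_mono: "S \<subseteq> T \<Longrightarrow> conn tail head S x y \<Longrightarrow> conn tail head T x y"
  by (rule conn_lift[of S]) (auto intro: conn_edge)

lemma conn_cross:
  "conn tail head S x y \<Longrightarrow> \<not> conn tail head T x y \<Longrightarrow> \<exists>s\<in>S. \<not> conn tail head T (tail s) (head s)"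
  using conn_lift by metis

lemma no_cycle_subset: "G \<subseteq> F \<Longrightarrow> no_cycle tail head F \<Longrightarrow> no_cycle tail head G"
  unfolding no_cycle_def by blast

lemma no_cycle_empty: "no_cycle tail head {}"
  unfolding no_cycle_def undirected_cycle_def by auto

lemma mod_ne_aux:
  fixes i0 j m :: nat
  assumes "i0 < m" "Suc j < m"
  shows "(i0 + 1 + j) mod m \<noteq> i0"
proof
  assume h: "(i0 + 1 + j) mod m = i0"
  show False
  proof (cases "i0 + 1 + j < m")
    case True
    then have "(i0 + 1 + j) mod m = i0 + 1 + j" by simp
    then show False using h by simp
  next
    case False
    then have "(i0 + 1 + j) mod m = (i0 + 1 + j) - m"
      using assms by (simp add: le_mod_geq)
    moreover have "(i0 + 1 + j) - m < i0" using assms False by arith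
    ultimately show False using h by simp
  qed
qed

lemma cyc_walk:
  assumes m: "m = length es" and lv: "length vs = m"
    and ed: "\<And>i. i < m \<Longrightarrow> {tail (es ! i), head (es ! i)} = {vs ! i, vs ! ((i + 1) mod m)}"
    and i0: "i0 < m"
    and inF: "\<And>i. i < m \<Longrightarrow> i \<noteq> i0 \<Longrightarrow> es ! i \<in> F"
  shows "j < m \<Longrightarrow> conn tail head F (vs ! ((i0 + 1) mod m)) (vs ! ((i0 + 1 + j) mod m))"
proof (induct j)
  case 0 then show ?case by simp
next
  case (Suc j)
  define idx where "idx = (i0 + 1 + j) mod m"
  have idxm: "idx < m" using i0 idx_def by simp
  have "idx \<noteq> i0" unfolding idx_def using mod_ne_aux[OF i0 Suc(2)] .
  then have inF': "es ! idx \<in> F" using inF idxm by blast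
  have "(idx + 1) mod m = (i0 + 1 + Suc j) mod m" unfolding idx_def by (simp add: mod_Suc_eq)
  then have "{tail (es ! idx), head (es ! idx)} = {vs ! idx, vs ! ((i0 + 1 + Suc j) mod m)}"
    using ed[OF idxm] by simp
  then have c2: "conn tail head F (vs ! idx) (vs ! ((i0 + 1 + Suc j) mod m))"
    by (rule conn_edge2[OF inF'])
  have c1: "conn tail head F (vs ! ((i0 + 1) mod m)) (vs ! idx)"
    using Suc(1) Suc(2) unfolding idx_def by simp
  show ?case using conn_trans[OF c1 c2] .
qed

lemma cycle_conn:
  assumes cyc: "undirected_cycle tail head es vs" and sub: "set es \<subseteq> insert e F"
    and nc: "no_cycle tail head F"
  shows "conn tail head F (tail e) (head e)"
proof -
  define m where "m = length es"
  have cyc': "es \<noteq> [] \<and> length vs = length es \<and> distinct es \<and> distinct vs \<and>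
     (\<forall>i < length es. {tail (es ! i), head (es ! i)} = {vs ! i, vs ! ((i + 1) mod length es)})"
    using cyc unfolding undirected_cycle_def .
  have des: "distinct es" using cyc' by blast
  have lv: "length vs = m" using cyc' m_def by simp
  have ed: "\<And>i. i < m \<Longrightarrow> {tail (es ! i), head (es ! i)} = {vs ! i, vs ! ((i + 1) mod m)}"
    using cyc' unfolding m_def by blast
  have "e \<in> set es"
  proof (rule ccontr)
    assume "e \<notin> set es"
    then have "set es \<subseteq> F" using sub by blast
    then show False using nc cyc unfolding no_cycle_def by blast
  qed
  then obtain i0 where i0: "i0 < m" "es ! i0 = e" unfolding m_def using in_set_conv_nth[of e es] by blast
  have mpos: "0 < m" using i0 by simp
  have inF: "es ! i \<in> F" if "i < m" "i \<noteq> i0" for i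
  proof -
    have "es ! i \<noteq> es ! i0" using nth_eq_iff_index_eq[OF des] that i0(1) unfolding m_def by blast
    moreover have "es ! i \<in> set es" using that m_def by simp
    ultimately show ?thesis using sub i0(2) by blast
  qed
  have "i0 + 1 + (m - 1) = i0 + m" using mpos by simp
  then have eqi: "(i0 + 1 + (m - 1)) mod m = i0" using i0 by simp
  have c1: "conn tail head F (vs ! ((i0 + 1) mod m)) (vs ! i0)"
    using cyc_walk[OF m_def lv ed i0(1) inF, of "m - 1"] mpos eqi by simp
  have "{tail e, head e} = {vs ! i0, vs ! ((i0 + 1) mod m)}" using ed[OF i0(1)] i0(2) by simp
  then have "(tail e = vs ! i0 \<and> head e = vs ! ((i0 + 1) mod m)) \<or> (tail e = vs ! ((i0 + 1) mod m) \<and> head e = vs ! i0)"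
    by (simp add: doubleton_eq_iff)
  then show ?thesis
  proof
    assume "tail e = vs ! i0 \<and> head e = vs ! ((i0 + 1) mod m)"
    then show ?thesis using conn_sym[OF c1] by simp
  next
    assume "tail e = vs ! ((i0 + 1) mod m) \<and> head e = vs ! i0"
    then show ?thesis using c1 by simp
  qed
qed

lemma no_cycle_insert:
  "no_cycle tail head F \<Longrightarrow> \<not> conn tail head F (tail e) (head e) \<Longrightarrow> no_cycle tail head (insert e F)"
  using cycle_conn unfolding no_cycle_def by metis

definition upath where
  "upath tail head F es vs \<longleftrightarrow> length vs = Suc (length es) \<and> distinct vs \<and> set es \<subseteq> F \<and>
     (\<forall>i<length es. {tail (es ! i), head (es ! i)} = {vs ! i, vs ! Suc i})"

lemma conn_upath:
  assumes "conn tail head F x y"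
  shows "\<exists>es vs. upath tail head F es vs \<and> hd vs = x \<and> last vs = y"
proof -
  have "(x,y) \<in> (ur tail head F)\<^sup>*" using assms by (simp add: conn_def)
  then show ?thesis
  proof (induct rule: rtrancl_induct)
    case base
    show ?case by (rule exI[of _ "[]"], rule exI[of _ "[x]"]) (simp add: upath_def)
  next
    case (step y z)
    from step(3) obtain es vs where p: "upath tail head F es vs" "hd vs = x" "last vs = y" by blast
    from step(2) obtain f where f: "f \<in> F" "{tail f, head f} = {y, z}"
      unfolding ur_def by blast
    have lv: "length vs = Suc (length es)" and dv: "distinct vs" and se: "set es \<subseteq> F"
      and ed: "\<And>i. i < length es \<Longrightarrow> {tail (es ! i), head (es ! i)} = {vs ! i, vs ! Suc i}"
      using p(1) unfolding upath_def by auto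
    have vsne: "vs \<noteq> []" using lv by auto
    show ?case
    proof (cases "z \<in> set vs")
      case True
      then obtain i where i: "i < length vs" "vs ! i = z" by (metis in_set_conv_nth)
      have "upath tail head F (take i es) (take (Suc i) vs)"
        unfolding upath_def using lv dv se ed i
        by (auto simp: min_def dest: in_set_takeD)
      moreover have "hd (take (Suc i) vs) = x" using p(2) vsne by simp
      moreover have "last (take (Suc i) vs) = z" using i
        by (simp add: take_Suc_conv_app_nth)
      ultimately show ?thesis by blast
    next
      case False
      have "upath tail head F (es @ [f]) (vs @ [z])"
        unfolding upath_def
      proof (intro conjI allI impI)
        show "length (vs @ [z]) = Suc (length (es @ [f]))" using lv by simp
        show "distinct (vs @ [z])" using dv False by simp
        show "set (es @ [f]) \<subseteq> F" using se f by simp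
        fix i assume "i < length (es @ [f])"
        then have "i < length es \<or> i = length es" by auto
        then show "{tail ((es @ [f]) ! i), head ((es @ [f]) ! i)} = {(vs @ [z]) ! i, (vs @ [z]) ! Suc i}"
        proof
          assume "i < length es" then show ?thesis using ed lv by (simp add: nth_append)
        next
          assume ie: "i = length es"
          have "vs ! i = y" using p(3) lv ie vsne by (simp add: last_conv_nth)
          then show ?thesis using ie lv f(2) by (simp add: nth_append)
        qed
      qed
      moreover have "hd (vs @ [z]) = x" using p(2) vsne by simp
      ultimately show ?thesis by (intro exI[of _ "es @ [f]"] exI[of _ "vs @ [z]"]) simp
    qed
  qed
qed

lemma upath_distinct_edges:
  assumes "upath tail head F es vs" shows "distinct es"
proof -
  have lv: "length vs = Suc (length es)" and dv: "distinct vs"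
    and ed: "\<And>i. i < length es \<Longrightarrow> {tail (es ! i), head (es ! i)} = {vs ! i, vs ! Suc i}"
    using assms unfolding upath_def by auto
  show ?thesis
  proof (subst distinct_conv_nth, intro allI impI)
    fix i j assume ij: "i < length es" "j < length es" "i \<noteq> j"
    show "es ! i \<noteq> es ! j"
    proof
      assume eq: "es ! i = es ! j"
      then have "{vs ! i, vs ! Suc i} = {vs ! j, vs ! Suc j}" using ed ij by metis
      then have "(vs ! i = vs ! j \<and> vs ! Suc i = vs ! Suc j) \<or> (vs ! i = vs ! Suc j \<and> vs ! Suc i = vs ! j)"
        by (metis doubleton_eq_iff)
      then show False using dv ij lv by (auto simp: nth_eq_iff_index_eq)
    qed
  qed
qed

lemma conn_cycle:
  assumes "conn tail head F (tail e) (head e)" "e \<notin> F"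
  shows "\<not> no_cycle tail head (insert e F)"
proof -
  obtain es vs where p: "upath tail head F es vs" "hd vs = head e" "last vs = tail e"
    using conn_upath[OF conn_sym[OF assms(1)]] by blast
  have lv: "length vs = Suc (length es)" and dv: "distinct vs" and se: "set es \<subseteq> F"
    and ed: "\<And>i. i < length es \<Longrightarrow> {tail (es ! i), head (es ! i)} = {vs ! i, vs ! Suc i}"
    using p(1) unfolding upath_def by auto
  have des: "distinct es" using upath_distinct_edges[OF p(1)] .
  have vsne: "vs \<noteq> []" using lv by auto
  have "undirected_cycle tail head (es @ [e]) vs"
    unfolding undirected_cycle_def
  proof (intro conjI allI impI)
    show "es @ [e] \<noteq> []" by simp
    show "length vs = length (es @ [e])" using lv by simp
    show "distinct (es @ [e])" using des se assms(2) by auto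
    show "distinct vs" by fact
    fix i assume "i < length (es @ [e])"
    then have "i < length es \<or> i = length es" by auto
    then show "{tail ((es @ [e]) ! i), head ((es @ [e]) ! i)} = {vs ! i, vs ! ((i + 1) mod length (es @ [e]))}"
    proof
      assume "i < length es" then show ?thesis using ed by (simp add: nth_append)
    next
      assume ie: "i = length es"
      have "vs ! i = tail e" using p(3) lv ie vsne by (simp add: last_conv_nth)
      moreover have "vs ! 0 = head e" using p(2) vsne by (simp add: hd_conv_nth)
      ultimately show ?thesis using ie by (simp add: nth_append insert_commute)
    qed
  qed
  moreover have "set (es @ [e]) \<subseteq> insert e F" using se by auto
  ultimately show ?thesis unfolding no_cycle_def by blast
qed

lemma fin_indep_cards:
  assumes "finite S"
  shows "finite (card ` {G. G \<subseteq> S \<and> no_cycle tail head G})"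
proof -
  have "{G. G \<subseteq> S \<and> no_cycle tail head G} \<subseteq> Pow S" by blast
  then have "finite {G. G \<subseteq> S \<and> no_cycle tail head G}" using assms finite_subset by blast
  then show ?thesis by (rule finite_imageI)
qed

lemma grank_indep:
  assumes "finite F" "no_cycle tail head F"
  shows "grank tail head F = card F"
  unfolding grank_def
proof (rule Max_eqI[OF fin_indep_cards[OF assms(1)]])
  fix y assume "y \<in> card ` {G. G \<subseteq> F \<and> no_cycle tail head G}"
  then obtain G where "G \<subseteq> F" "y = card G" by blast
  then show "y \<le> card F" using card_mono assms(1) by blast
next
  show "card F \<in> card ` {G. G \<subseteq> F \<and> no_cycle tail head G}"
    by (rule image_eqI[of _ _ F]) (use assms in auto)
qed

lemma grank_ge:
  assumes "finite S" "F \<subseteq> S" "no_cycle tail head F"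
  shows "card F \<le> grank tail head S"
  unfolding grank_def
proof (rule Max_ge[OF fin_indep_cards[OF assms(1)]])
  show "card F \<in> card ` {G. G \<subseteq> S \<and> no_cycle tail head G}"
    by (rule image_eqI[of _ _ F]) (use assms in auto)
qed

lemma grank_obtain:
  assumes "finite S"
  shows "\<exists>F\<subseteq>S. no_cycle tail head F \<and> card F = grank tail head S"
proof -
  let ?S = "card ` {G. G \<subseteq> S \<and> no_cycle tail head G}"
  have "card {} \<in> ?S"
    by (rule image_eqI[of _ _ "{}"]) (use no_cycle_empty in auto)
  then have "?S \<noteq> {}" by blast
  then have "Max ?S \<in> ?S" using Max_in[OF fin_indep_cards[OF assms(1)]] by blast
  then obtain F where "F \<subseteq> S" "no_cycle tail head F" "Max ?S = card F" by auto
  then show ?thesis unfolding grank_def by metis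
qed

lemma grank_insert_dep:
  assumes "finite F" "no_cycle tail head F" "\<not> no_cycle tail head (insert e F)"
  shows "grank tail head (insert e F) = card F"
  unfolding grank_def
proof (rule Max_eqI[OF fin_indep_cards])
  show "finite (insert e F)" using assms(1) by simp
  have eF: "e \<notin> F"
  proof
    assume "e \<in> F" then have "insert e F = F" by (rule insert_absorb)
    then show False using assms(2,3) by simp
  qed
  fix y assume "y \<in> card ` {G. G \<subseteq> insert e F \<and> no_cycle tail head G}"
  then obtain G where G: "G \<subseteq> insert e F" "no_cycle tail head G" "y = card G" by blast
  have "G \<noteq> insert e F" using G(2) assms(3) by metis
  then have "G \<subset> insert e F" using G(1) by (rule psubsetI[rotated])
  then have "card G < card (insert e F)" using assms(1) by (simp add: psubset_card_mono)
  then show "y \<le> card F" using G(3) eF assms(1) by simp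
next
  show "card F \<in> card ` {G. G \<subseteq> insert e F \<and> no_cycle tail head G}"
    by (rule image_eqI[of _ _ F]) (use assms in auto)
qed

lemma gspan_char:
  assumes "finite F" "no_cycle tail head F" "e \<in> E"
  shows "e \<in> gspan E tail head F \<longleftrightarrow> conn tail head F (tail e) (head e)"
proof (cases "e \<in> F")
  case True
  then have "insert e F = F" by (rule insert_absorb)
  then have "e \<in> gspan E tail head F" unfolding gspan_def using assms(3) by simp
  moreover have "conn tail head F (tail e) (head e)" using True by (rule conn_edge)
  ultimately show ?thesis by simp
next
  case False
  show ?thesis
  proof
    assume "e \<in> gspan E tail head F"
    then have eq: "grank tail head (insert e F) = grank tail head F" unfolding gspan_def by simp
    show "conn tail head F (tail e) (head e)"
    proof (rule ccontr)
      assume "\<not> conn tail head F (tail e) (head e)"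
      then have "no_cycle tail head (insert e F)" by (rule no_cycle_insert[OF assms(2)])
      then have "grank tail head (insert e F) = card (insert e F)"
        by (rule grank_indep[rotated]) (use assms(1) in simp)
      also have "\<dots> = Suc (card F)" using False assms(1) by simp
      finally show False using eq grank_indep[OF assms(1,2)] by simp
    qed
  next
    assume "conn tail head F (tail e) (head e)"
    then have "\<not> no_cycle tail head (insert e F)" using False by (rule conn_cycle)
    then have "grank tail head (insert e F) = grank tail head F"
      using grank_insert_dep[OF assms(1,2)] grank_indep[OF assms(1,2)] by simp
    then show "e \<in> gspan E tail head F" unfolding gspan_def using assms(3) by simp
  qed
qed

lemma full_rank_conn:
  assumes "finite S" "F \<subseteq> S" "no_cycle tail head F" "card F = grank tail head S" "e \<in> S"
  shows "conn tail head F (tail e) (head e)"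
proof (rule ccontr)
  assume nc: "\<not> conn tail head F (tail e) (head e)"
  have eF: "e \<notin> F"
  proof
    assume "e \<in> F" then have "conn tail head F (tail e) (head e)" by (rule conn_edge)
    then show False using nc by simp
  qed
  have fF: "finite F" using assms(1,2) finite_subset by blast
  have "no_cycle tail head (insert e F)" using no_cycle_insert[OF assms(3) nc] .
  moreover have "insert e F \<subseteq> S" using assms(2,5) by simp
  ultimately have "card (insert e F) \<le> grank tail head S" by (intro grank_ge[OF assms(1)])
  then show False using eF fF assms(4) by simp
qed

lemma exchange_card:
  assumes "finite X" "no_cycle tail head X"
  shows "finite F \<Longrightarrow> no_cycle tail head F \<Longrightarrow> (\<forall>f\<in>F. conn tail head X (tail f) (head f)) \<Longrightarrow> card F \<le> card X"
proof (induct "card (F - X)" arbitrary: F rule: less_induct)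
  case less
  show ?case
  proof (cases "F \<subseteq> X")
    case True then show ?thesis using card_mono assms(1) by blast
  next
    case False
    then obtain f where f: "f \<in> F" "f \<notin> X" by blast
    define F0 where "F0 = F - {f}"
    have FF0: "F = insert f F0" using f(1) F0_def by blast
    have fF0: "f \<notin> F0" using F0_def by blast
    have nc0: "no_cycle tail head F0" using no_cycle_subset[OF _ less(3), of F0] F0_def by blast
    have ncf: "\<not> conn tail head F0 (tail f) (head f)"
    proof
      assume "conn tail head F0 (tail f) (head f)"
      then have "\<not> no_cycle tail head (insert f F0)" using fF0 by (rule conn_cycle)
      then show False using less(3) FF0 by simp
    qed
    have "conn tail head X (tail f) (head f)" using less(4) f(1) by blast
    then obtain x where x: "x \<in> X" "\<not> conn tail head F0 (tail x) (head x)"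
      using conn_cross[OF _ ncf] by blast
    have xF0: "x \<notin> F0"
    proof
      assume "x \<in> F0" then have "conn tail head F0 (tail x) (head x)" by (rule conn_edge)
      then show False using x(2) by simp
    qed
    define F' where "F' = insert x F0"
    have fin': "finite F'" using less(2) F0_def F'_def by simp
    have nc': "no_cycle tail head F'" using no_cycle_insert[OF nc0 x(2)] F'_def by simp
    have cn': "\<forall>f'\<in>F'. conn tail head X (tail f') (head f')"
    proof
      fix f' assume "f' \<in> F'"
      then have "f' = x \<or> f' \<in> F" using F'_def F0_def by blast
      then show "conn tail head X (tail f') (head f')"
        using less(4) conn_edge[OF x(1)] by blast
    qed
    have eqD: "F' - X = (F - X) - {f}" using x(1) F'_def F0_def by blast
    have "f \<in> F - X" using f by blast
    moreover have "finite (F - X)" using less(2) by simp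
    ultimately have "card ((F - X) - {f}) < card (F - X)" by (rule card_Diff1_less[rotated])
    then have "card (F' - X) < card (F - X)" using eqD by simp
    then have "card F' \<le> card X" using less(1) fin' nc' cn' by blast
    moreover have "card F' = card F"
    proof -
      have "finite F0" using less(2) F0_def by simp
      then have "card F' = Suc (card F0)" using F'_def xF0 by simp
      moreover have "card F = Suc (card F0)" using FF0 fF0 \<open>finite F0\<close> by simp
      ultimately show ?thesis by simp
    qed
    ultimately show ?thesis by simp
  qed
qed

lemma multichain_mono:
  assumes "multichain L"
  shows "i \<le> j \<Longrightarrow> j < length L \<Longrightarrow> L ! i \<subseteq> L ! j"
proof (induct j)
  case 0 then show ?case by simp
next
  case (Suc j)
  show ?case
  proof (cases "i = Suc j")
    case True then show ?thesis by simp
  next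
    case False
    then have "i \<le> j" using Suc(2) by simp
    then have "L ! i \<subseteq> L ! j" using Suc by simp
    moreover have "L ! j \<subseteq> L ! Suc j" using assms Suc(3) unfolding multichain_def by blast
    ultimately show ?thesis by blast
  qed
qed

lemma cset_mono:
  assumes "multichain L" "i \<le> j" "j \<le> length L"
  shows "cset L i \<subseteq> cset L j"
  using assms multichain_mono[OF assms(1), of "i - 1" "j - 1"] unfolding cset_def by auto

lemma strict_chain_multichain: "strict_chain L \<Longrightarrow> multichain L"
  unfolding strict_chain_def multichain_def by blast

lemma cset_last: "L \<noteq> [] \<Longrightarrow> cset L (length L) = last L"
  unfolding cset_def by (simp add: last_conv_nth)

lemma chain_sub_E:
  assumes "multichain L" "L \<noteq> []" "last L = E" "i < length L"
  shows "L ! i \<subseteq> E"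
  using multichain_mono[OF assms(1), of i "length L - 1"] assms by (simp add: last_conv_nth)

lemma lev_props:
  assumes ch: "multichain L" and ne: "L \<noteq> []" and la: "last L = E" and e: "e \<in> E"
  shows "1 \<le> lev L e \<and> lev L e \<le> length L \<and> e \<in> cset L (lev L e) \<and> e \<notin> cset L (lev L e - 1)"
proof -
  define m where "m = (LEAST i. e \<in> cset L i)"
  have ex: "e \<in> cset L (length L)" using cset_last[OF ne] la e by simp
  have em: "e \<in> cset L m" using LeastI[of "\<lambda>i. e \<in> cset L i", OF ex] m_def by simp
  have mle: "m \<le> length L" using Least_le[of "\<lambda>i. e \<in> cset L i", OF ex] m_def by simp
  have m1: "1 \<le> m" using em unfolding cset_def by (cases "m = 0") auto
  have nm: "e \<notin> cset L (m - 1)" using not_less_Least[of "m - 1" "\<lambda>i. e \<in> cset L i"] m1 m_def by simp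
  have P: "1 \<le> m \<and> m \<le> length L \<and> e \<in> cset L m - cset L (m - 1)" using m1 mle em nm by simp
  have uniq: "i = m" if "1 \<le> i \<and> i \<le> length L \<and> e \<in> cset L i - cset L (i - 1)" for i
  proof (rule ccontr)
    assume "i \<noteq> m"
    then have "i < m \<or> m < i" by arith
    then show False
    proof
      assume "i < m"
      then show False using not_less_Least[of i "\<lambda>i. e \<in> cset L i"] that m_def by simp
    next
      assume "m < i"
      then have "m \<le> i - 1" "i - 1 \<le> length L" using that by auto
      then have "cset L m \<subseteq> cset L (i - 1)" by (rule cset_mono[OF ch])
      then show False using em that by blast
    qed
  qed
  have "lev L e = m" unfolding lev_def using P uniq by (rule the_equality)
  then show ?thesis using P by simp
qed

lemma lev_le_iff:
  assumes ch: "multichain L" and ne: "L \<noteq> []" and la: "last L = E" and e: "e \<in> E"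
    and i: "i \<le> length L"
  shows "e \<in> cset L i \<longleftrightarrow> lev L e \<le> i"
proof
  assume "e \<in> cset L i"
  show "lev L e \<le> i"
  proof (rule ccontr)
    assume "\<not> lev L e \<le> i"
    then have "i \<le> lev L e - 1" "lev L e - 1 \<le> length L" using lev_props[OF assms(1-4)] by auto
    then have "cset L i \<subseteq> cset L (lev L e - 1)" by (rule cset_mono[OF ch])
    then show False using \<open>e \<in> cset L i\<close> lev_props[OF assms(1-4)] by blast
  qed
next
  assume "lev L e \<le> i"
  then show "e \<in> cset L i" using cset_mono[OF ch, of "lev L e" i] lev_props[OF assms(1-4)] i by blast
qed

definition chainE :: "'e set list \<Rightarrow> 'e set \<Rightarrow> bool" where
  "chainE L E \<longleftrightarrow> multichain L \<and> L \<noteq> [] \<and> last L = E"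

lemma wf_finite: "digraph_wf V r E tail head pref \<Longrightarrow> finite E"
  unfolding digraph_wf_def by blast

lemma wf_head: "digraph_wf V r E tail head pref \<Longrightarrow> e \<in> E \<Longrightarrow> head e \<in> V"
  unfolding digraph_wf_def by blast

lemma wf_pref:
  assumes "digraph_wf V r E tail head pref" "v \<in> V"
  shows "\<forall>e\<in>E. head e = v \<longrightarrow> \<not> pref v e e"
    "\<forall>e\<in>E. \<forall>f\<in>E. \<forall>g\<in>E. head e = v \<and> head f = v \<and> head g = v \<longrightarrow>
                  pref v e f \<longrightarrow> pref v f g \<longrightarrow> pref v e g"
proof -
  have "\<forall>v\<in>V. (\<forall>e\<in>E. head e = v \<longrightarrow> \<not> pref v e e) \<and>
             (\<forall>e\<in>E. \<forall>f\<in>E. \<forall>g\<in>E. head e = v \<and> head f = v \<and> head g = v \<longrightarrow>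
                  pref v e f \<longrightarrow> pref v f g \<longrightarrow> pref v e g)"
    using assms(1) unfolding digraph_wf_def by (elim conjE)
  then have "(\<forall>e\<in>E. head e = v \<longrightarrow> \<not> pref v e e) \<and>
             (\<forall>e\<in>E. \<forall>f\<in>E. \<forall>g\<in>E. head e = v \<and> head f = v \<and> head g = v \<longrightarrow>
                  pref v e f \<longrightarrow> pref v f g \<longrightarrow> pref v e g)"
    using assms(2) by (rule bspec)
  note c = this
  show "\<forall>e\<in>E. head e = v \<longrightarrow> \<not> pref v e e" using c by (rule conjunct1)
  show "\<forall>e\<in>E. \<forall>f\<in>E. \<forall>g\<in>E. head e = v \<and> head f = v \<and> head g = v \<longrightarrow>
                  pref v e f \<longrightarrow> pref v f g \<longrightarrow> pref v e g" using c by (rule conjunct2)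
qed

lemma wf_asym:
  assumes "digraph_wf V r E tail head pref" "v \<in> V" "e \<in> E" "f \<in> E" "head e = v" "head f = v"
    "pref v e f"
  shows "\<not> pref v f e"
proof
  assume pfe: "pref v f e"
  have "pref v e e"
    by (rule wf_pref(2)[OF assms(1,2), rule_format, of e f e]) (use assms pfe in auto)
  moreover have "\<not> pref v e e"
    by (rule wf_pref(1)[OF assms(1,2), rule_format, of e]) (use assms in auto)
  ultimately show False by simp
qed

lemma delta_mem: "f \<in> E \<Longrightarrow> f \<in> delta E head (head f)"
  unfolding delta_def by simp

lemma lev_props': "chainE L E \<Longrightarrow> e \<in> E \<Longrightarrow>
   1 \<le> lev L e \<and> lev L e \<le> length L \<and> e \<in> cset L (lev L e) \<and> e \<notin> cset L (lev L e - 1)"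
  unfolding chainE_def using lev_props[of L E e] by (elim conjE) 

lemma lev_le_iff': "chainE L E \<Longrightarrow> e \<in> E \<Longrightarrow> i \<le> length L \<Longrightarrow> e \<in> cset L i \<longleftrightarrow> lev L e \<le> i"
  unfolding chainE_def using lev_le_iff[of L E e i] by (elim conjE) 

lemma levstar_ge:
  assumes "finite E" "f \<in> E"
  shows "lev L f \<le> levstar E head L (head f)"
proof -
  have fin: "finite (lev L ` delta E head (head f))" using assms(1) unfolding delta_def by simp
  have "lev L f \<in> lev L ` delta E head (head f)" using delta_mem[OF assms(2)] by (rule imageI)
  then show ?thesis unfolding levstar_def using Max_ge[OF fin] by blast
qed

lemma levstar_attained:
  assumes "finite E" "g \<in> E"
  shows "\<exists>f\<in>E. head f = head g \<and> lev L f = levstar E head L (head g)"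
proof -
  have fin: "finite (lev L ` delta E head (head g))" using assms(1) unfolding delta_def by simp
  have "lev L g \<in> lev L ` delta E head (head g)" using delta_mem[OF assms(2)] by (rule imageI)
  then have "lev L ` delta E head (head g) \<noteq> {}" by blast
  then have "Max (lev L ` delta E head (head g)) \<in> lev L ` delta E head (head g)"
    using Max_in[OF fin] by blast
  then obtain f where f: "f \<in> delta E head (head g)" "lev L f = Max (lev L ` delta E head (head g))"
    by (rule imageE) simp
  have "f \<in> E" "head f = head g" using f(1) unfolding delta_def by simp_all
  then show ?thesis using f(2) unfolding levstar_def by blast
qed

lemma ECs_D:
  assumes "b \<in> ECs V E head pref L"
  shows "b \<in> E" "head b \<in> V"
    "\<not> (\<exists>e'\<in>delta E head (head b). lev L e' = lev L b \<and> pref (head b) e' b)"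
    "lev L b = levstar E head L (head b) \<or>
     (lev L b = levstar E head L (head b) - 1 \<and>
       (\<forall>f\<in>delta E head (head b). lev L f = levstar E head L (head b) \<longrightarrow> pref (head b) b f))"
  using assms unfolding ECs_def by blast+

lemma ECs_W2:
  assumes wf: "digraph_wf V r E tail head pref" and ch: "chainE L E"
    and b: "b \<in> ECs V E head pref L" and f: "f \<in> E" "head f = head b"
  shows "lev L f \<le> lev L b + 1 \<and> (lev L f = lev L b + 1 \<longrightarrow> pref (head b) b f)"
proof -
  have fin: "finite E" using wf_finite[OF wf] .
  have bE: "b \<in> E" using ECs_D(1)[OF b] .
  let ?s = "levstar E head L (head b)"
  have fs: "lev L f \<le> ?s" using levstar_ge[OF fin f(1), where L=L and head=head] f(2) by simp
  have bs: "lev L b \<le> ?s" using levstar_ge[OF fin bE, where L=L and head=head] .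
  have b1: "1 \<le> lev L b" using lev_props'[OF ch bE] by blast
  from ECs_D(4)[OF b] show ?thesis
  proof
    assume "lev L b = ?s"
    then show ?thesis using fs by simp
  next
    assume h: "lev L b = ?s - 1 \<and> (\<forall>f\<in>delta E head (head b). lev L f = ?s \<longrightarrow> pref (head b) b f)"
    then have s: "?s = lev L b + 1" using b1 bs by linarith
    have "f \<in> delta E head (head b)" using f unfolding delta_def by simp
    then show ?thesis using h s fs by simp
  qed
qed

lemma ECs_W1:
  assumes wf: "digraph_wf V r E tail head pref" and ch: "chainE L E"
    and b: "b \<in> ECs V E head pref L" and f: "f \<in> E" "head f = head b"
    and p: "pref (head b) f b"
  shows "lev L f < lev L b"
proof -
  have bE: "b \<in> E" using ECs_D(1)[OF b] .
  have hv: "head b \<in> V" using ECs_D(2)[OF b] .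
  have fd: "f \<in> delta E head (head b)" using f unfolding delta_def by simp
  have ne: "lev L f \<noteq> lev L b" using ECs_D(3)[OF b] fd p by blast
  have w2: "lev L f \<le> lev L b + 1 \<and> (lev L f = lev L b + 1 \<longrightarrow> pref (head b) b f)"
    using ECs_W2[OF wf ch b f] .
  have "\<not> pref (head b) b f" using wf_asym[OF wf hv f(1) bE f(2) refl p] .
  then show ?thesis using ne w2 by linarith
qed

lemma lev_delta:
  assumes wf: "digraph_wf V r E tail head pref" and chC: "chainE C E" and chD: "chainE D E"
    and x: "x \<in> ECs V E head pref C" and a: "a \<in> ECs V E head pref D" and h: "head x = head a"
  shows "lev D x + lev C a \<le> lev D a + lev C x"
proof -
  have xE: "x \<in> E" using ECs_D(1)[OF x] .
  have aE: "a \<in> E" using ECs_D(1)[OF a] .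
  have hv: "head a \<in> V" using ECs_D(2)[OF a] .
  consider "pref (head a) x a" | "pref (head a) a x" | "\<not> pref (head a) x a \<and> \<not> pref (head a) a x" by blast
  then show ?thesis
  proof cases
    case 1
    have "lev D x < lev D a" using ECs_W1[OF wf chD a xE h 1] .
    moreover have "lev C a \<le> lev C x + 1" using ECs_W2[OF wf chC x aE h[symmetric]] by blast
    ultimately show ?thesis by linarith
  next
    case 2
    have "lev C a < lev C x" using ECs_W1[OF wf chC x aE h[symmetric]] 2 h by simp
    moreover have "lev D x \<le> lev D a + 1" using ECs_W2[OF wf chD a xE h] by blast
    ultimately show ?thesis by linarith
  next
    case 3
    have "lev D x \<le> lev D a" using ECs_W2[OF wf chD a xE h] 3 by auto
    moreover have "lev C a \<le> lev C x" using ECs_W2[OF wf chC x aE h[symmetric]] 3 h by auto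
    ultimately show ?thesis by linarith
  qed
qed

lemma tight_ECs:
  assumes wf: "digraph_wf V r E tail head pref" and chC: "chainE C E" and chD: "chainE D E"
    and a: "a \<in> ECs V E head pref D" and t: "lev C a = lev D a"
    and le: "\<forall>e\<in>E. lev C e \<le> lev D e"
  shows "a \<in> ECs V E head pref C"
proof -
  have fin: "finite E" using wf_finite[OF wf] .
  have aE: "a \<in> E" using ECs_D(1)[OF a] .
  have hv: "head a \<in> V" using ECs_D(2)[OF a] .
  let ?s = "levstar E head C (head a)"
  have s1: "lev C a \<le> ?s" using levstar_ge[OF fin aE, where L=C and head=head] .
  obtain f where f: "f \<in> E" "head f = head a" "lev C f = ?s" using levstar_attained[OF fin aE, where L=C and head=head] by blast
  have "lev D f \<le> lev D a + 1" using ECs_W2[OF wf chD a f(1,2)] by blast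
  then have s2: "?s \<le> lev C a + 1" using f(3) le f(1) t by fastforce
  have undom: "\<not> (\<exists>e'\<in>delta E head (head a). lev C e' = lev C a \<and> pref (head a) e' a)"
  proof
    assume "\<exists>e'\<in>delta E head (head a). lev C e' = lev C a \<and> pref (head a) e' a"
    then obtain e' where e': "e' \<in> E" "head e' = head a" "lev C e' = lev C a" "pref (head a) e' a"
      unfolding delta_def by blast
    have "lev D e' < lev D a" using ECs_W1[OF wf chD a e'(1,2) e'(4)] .
    then show False using e'(1,3) le t by fastforce
  qed
  have "lev C a = ?s \<or> (lev C a = ?s - 1 \<and>
       (\<forall>f\<in>delta E head (head a). lev C f = ?s \<longrightarrow> pref (head a) a f))"
  proof (cases "?s = lev C a")
    case True then show ?thesis by simp
  next
    case False
    then have s: "?s = lev C a + 1" using s1 s2 by linarith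
    have "\<forall>f\<in>delta E head (head a). lev C f = ?s \<longrightarrow> pref (head a) a f"
    proof (intro ballI impI)
      fix g assume g: "g \<in> delta E head (head a)" "lev C g = ?s"
      have gE: "g \<in> E" "head g = head a" using g(1) unfolding delta_def by auto
      have "lev D g \<le> lev D a + 1 \<and> (lev D g = lev D a + 1 \<longrightarrow> pref (head a) a g)"
        using ECs_W2[OF wf chD a gE] .
      moreover have "lev C g \<le> lev D g" using le gE(1) by blast
      ultimately show "pref (head a) a g" using g(2) s t by simp
    qed
    then show ?thesis using s by simp
  qed
  then show ?thesis unfolding ECs_def using aE hv undom by blast
qed

lemma cset_sub_E:
  assumes "chainE L E" "i \<le> length L"
  shows "cset L i \<subseteq> E"
proof (cases "i = 0")
  case True then show ?thesis unfolding cset_def by simp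
next
  case False
  then have "i - 1 < length L" using assms(2) by simp
  then show ?thesis unfolding cset_def using False chain_sub_E[of L E "i - 1"] assms(1)
    unfolding chainE_def by simp
qed

lemma ECs_sub: "ECs V E head pref L \<subseteq> E"
  unfolding ECs_def by blast

locale setting =
  fixes V :: "'v set" and r :: 'v and E :: "'e set"
    and tail head :: "'e \<Rightarrow> 'v" and pref :: "'v \<Rightarrow> 'e \<Rightarrow> 'e \<Rightarrow> bool"
    and A :: "'e set" and Ds Cs :: "'e set list" and I :: "'e set" and k :: nat
  assumes wf: "digraph_wf V r E tail head pref"
    and A_arb: "arborescence V E tail head A"
    and A_EC: "A \<subseteq> ECs V E head pref Ds"
    and A_span: "\<forall>i < length Ds. gspan E tail head (A \<inter> Ds ! i) = Ds ! i"
    and chD: "chainE Ds E"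
    and chC: "chainE Cs E"
    and len: "length Cs \<le> length Ds"
    and DC: "\<forall>i < length Cs. Ds ! i \<subseteq> Cs ! i"
    and I_br: "branching V E tail head I"
    and I_EC: "I \<subseteq> ECs V E head pref Cs"
    and I_max: "\<forall>J. branching V E tail head J \<and> J \<subseteq> ECs V E head pref Cs \<longrightarrow>
                    \<not> lex_less (count_vec Cs I) (count_vec Cs J)"
    and k1: "1 \<le> k" and kp: "k \<le> length Cs"
    and tightI: "\<forall>i. 1 \<le> i \<and> i < k \<longrightarrow> card (I \<inter> cset Cs i) = grank tail head (cset Cs i)"
begin

lemma finE: "finite E" using wf_finite[OF wf] .

lemma A_sub: "A \<subseteq> E" using A_arb unfolding arborescence_def by blast
lemma A_nc: "no_cycle tail head A" using A_arb unfolding arborescence_def by blast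
lemma A_card: "v \<in> V \<Longrightarrow> card (A \<inter> delta E head v) = 1"
  using A_arb unfolding arborescence_def by blast
lemma finA: "finite A" using A_sub finE finite_subset by blast

lemma I_sub: "I \<subseteq> E" using I_br unfolding branching_def by blast
lemma I_nc: "no_cycle tail head I" using I_br unfolding branching_def by blast

lemma DC':
  assumes "1 \<le> i" "i \<le> length Cs"
  shows "cset Ds i \<subseteq> cset Cs i"
  using DC assms unfolding cset_def by simp

lemma lev_le: 
  assumes e: "e \<in> E"
  shows "lev Cs e \<le> lev Ds e"
proof -
  have pD: "1 \<le> lev Ds e \<and> lev Ds e \<le> length Ds \<and> e \<in> cset Ds (lev Ds e)"
    using lev_props'[OF chD e] by blast
  have pC: "lev Cs e \<le> length Cs" using lev_props'[OF chC e] by blast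
  show ?thesis
  proof (cases "lev Ds e \<le> length Cs")
    case True
    then have "e \<in> cset Cs (lev Ds e)" using DC'[of "lev Ds e"] pD by blast
    then show ?thesis using lev_le_iff'[OF chC e True] by blast
  next
    case False
    then show ?thesis using pC by simp
  qed
qed

lemma lev_le_all: "\<forall>e\<in>E. lev Cs e \<le> lev Ds e"
  using lev_le by blast

lemma spanI:
  assumes "1 \<le> i" "i < k" "J \<subseteq> E" "no_cycle tail head J"
    "card (J \<inter> cset Cs i) = card (I \<inter> cset Cs i)" "e \<in> cset Cs i"
  shows "conn tail head J (tail e) (head e)"
proof -
  have S: "cset Cs i \<subseteq> E" using cset_sub_E[OF chC] assms(2) kp by simp
  have finS: "finite (cset Cs i)" using S finE finite_subset by blast
  have nc: "no_cycle tail head (J \<inter> cset Cs i)" using no_cycle_subset[OF _ assms(4)] by blast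
  have cd: "card (J \<inter> cset Cs i) = grank tail head (cset Cs i)" using assms(1,2,5) tightI by simp
  have "conn tail head (J \<inter> cset Cs i) (tail e) (head e)"
    by (rule full_rank_conn[OF finS _ nc cd assms(6)]) blast
  then show ?thesis by (rule conn_mono[rotated]) blast
qed

lemma tight_lemma:
  assumes a: "a \<in> A" and j: "1 \<le> j" "j \<le> k" and aD: "a \<in> cset Ds j"
    and J: "J \<subseteq> E" "no_cycle tail head J"
    and cnt: "\<forall>i. 1 \<le> i \<and> i < j \<longrightarrow> card (J \<inter> cset Cs i) = card (I \<inter> cset Cs i)"
    and nc: "\<not> conn tail head J (tail a) (head a)"
  shows "lev Cs a = j \<and> lev Ds a = j"
proof -
  have aE: "a \<in> E" using a A_sub by blast
  have jq: "j \<le> length Ds" using j kp len by simp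
  have d: "lev Ds a \<le> j" using lev_le_iff'[OF chD aE jq] aD by blast
  have c: "lev Cs a \<le> lev Ds a" using lev_le[OF aE] .
  have c1: "1 \<le> lev Cs a" using lev_props'[OF chC aE] by blast
  have "\<not> lev Cs a < j"
  proof
    assume lt: "lev Cs a < j"
    have i1: "1 \<le> j - 1" using lt c1 by simp
    have ik: "j - 1 < k" using j by simp
    have ip: "j - 1 \<le> length Cs" using j kp by simp
    have "a \<in> cset Cs (j - 1)" using lev_le_iff'[OF chC aE ip] lt by simp
    moreover have "card (J \<inter> cset Cs (j - 1)) = card (I \<inter> cset Cs (j - 1))"
      using cnt i1 by simp
    ultimately have "conn tail head J (tail a) (head a)"
      using spanI[OF i1 ik J] by blast
    then show False using nc by simp
  qed
  then show ?thesis using d c by simp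
qed

end

context setting
begin

lemma count_vec_nth: "i < length Cs \<Longrightarrow> count_vec Cs X ! i = card (X \<inter> cset Cs (Suc i))"
  unfolding count_vec_def cset_def by simp

lemma lex_better:
  assumes B: "\<forall>i. 1 \<le> i \<and> i < k \<longrightarrow> card (B \<inter> cset Cs i) = card (I \<inter> cset Cs i)"
    and Bk: "card (I \<inter> cset Cs k) < card (B \<inter> cset Cs k)"
  shows "lex_less (count_vec Cs I) (count_vec Cs B)"
  unfolding lex_less_def
proof (rule exI[of _ "k - 1"], intro conjI)
  show "k - 1 < length (count_vec Cs I)" using k1 kp unfolding count_vec_def by simp
  show "take (k - 1) (count_vec Cs I) = take (k - 1) (count_vec Cs B)"
  proof (rule nth_take_lemma)
    show "k - 1 \<le> length (count_vec Cs I)" "k - 1 \<le> length (count_vec Cs B)"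
      using kp unfolding count_vec_def by simp_all
    fix i
    show "i < k - 1 \<longrightarrow> count_vec Cs I ! i = count_vec Cs B ! i"
    proof
      assume "i < k - 1"
      then have i: "i < length Cs" "1 \<le> Suc i" "Suc i < k" using kp by simp_all
      have "card (B \<inter> cset Cs (Suc i)) = card (I \<inter> cset Cs (Suc i))" using B i(2,3) by blast
      then show "count_vec Cs I ! i = count_vec Cs B ! i"
        using count_vec_nth[OF i(1), of I] count_vec_nth[OF i(1), of B] by simp
    qed
  qed
  have "k - 1 < length Cs" using k1 kp by simp
  then show "count_vec Cs I ! (k - 1) < count_vec Cs B ! (k - 1)"
    using count_vec_nth[of "k - 1"] Bk k1 by simp
qed

lemma card_insert_cond:
  assumes "finite S" "a \<notin> S"
  shows "card (insert a S \<inter> T) = card (S \<inter> T) + (if a \<in> T then 1 else 0)"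
  using assms by (cases "a \<in> T") (auto simp: Int_insert_left)

lemma card_remove_cond:
  assumes "finite S" "x \<in> S"
  shows "card ((S - {x}) \<inter> T) + (if x \<in> T then 1 else 0) = card (S \<inter> T)"
proof (cases "x \<in> T")
  case True
  have "(S - {x}) \<inter> T = (S \<inter> T) - {x}" by blast
  moreover have "x \<in> S \<inter> T" using True assms(2) by blast
  moreover have "finite (S \<inter> T)" using assms(1) by simp
  ultimately have "card (S \<inter> T - {x}) + 1 = card (S \<inter> T)"
    by (metis Suc_eq_plus1 card_Suc_Diff1)
  then show ?thesis using True \<open>(S - {x}) \<inter> T = (S \<inter> T) - {x}\<close> by simp
next
  case False
  then have "(S - {x}) \<inter> T = S \<inter> T" by blast
  then show ?thesis using False by simp
qed

lemma cascade:
  "card A - card (J \<inter> A) = n \<Longrightarrow> J \<subseteq> ECs V E head pref Cs \<Longrightarrow> J \<subseteq> cset Cs k \<Longrightarrow>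
   no_cycle tail head J \<Longrightarrow> (\<forall>v\<in>V. card (J \<inter> delta E head v) \<le> 1) \<Longrightarrow>
   a \<in> A \<Longrightarrow> 1 \<le> j \<Longrightarrow> j \<le> k \<Longrightarrow> lev Cs a = j \<Longrightarrow> lev Ds a = j \<Longrightarrow>
   \<not> conn tail head J (tail a) (head a) \<Longrightarrow>
   (\<forall>i. 1 \<le> i \<and> i \<le> k \<longrightarrow> card (J \<inter> cset Cs i) + (if j \<le> i \<and> i < k then 1 else 0) = card (I \<inter> cset Cs i))
   \<Longrightarrow> False"
proof (induct n arbitrary: J a j rule: less_induct)
  case (less n J a j)
  note n_def = less(2) and JEC = less(3) and JCk = less(4) and Jnc = less(5) and Jdeg = less(6)
    and aA = less(7) and j1 = less(8) and jk = less(9) and levCa = less(10) and levDa = less(11)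
    and ncon = less(12) and cnt = less(13)
  have aE: "a \<in> E" using aA A_sub by blast
  define z where "z = head a"
  have zV: "z \<in> V" using wf_head[OF wf aE] z_def by simp
  have aEDs0: "a \<in> ECs V E head pref Ds" using aA A_EC by blast
  have levCD: "lev Cs a = lev Ds a" using levCa levDa by simp
  have aEC: "a \<in> ECs V E head pref Cs"
    by (rule tight_ECs[OF wf chC chD aEDs0 levCD lev_le_all])
  have aJ: "a \<notin> J"
  proof
    assume "a \<in> J" then have "conn tail head J (tail a) (head a)" by (rule conn_edge)
    then show False using ncon by simp
  qed
  have JE: "J \<subseteq> E" using JEC ECs_sub[of V E head pref Cs] by blast
  have finJ: "finite J" using JE finE finite_subset by blast
  have memC: "\<And>e i. e \<in> E \<Longrightarrow> i \<le> length Cs \<Longrightarrow> e \<in> cset Cs i \<longleftrightarrow> lev Cs e \<le> i"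
    using lev_le_iff'[OF chC] by blast
  have aCk: "a \<in> cset Cs k" using memC[OF aE kp] levCa jk by simp
  have ncJa: "no_cycle tail head (insert a J)" using no_cycle_insert[OF Jnc ncon] .
  show False
  proof (cases "J \<inter> delta E head z = {}")
    case True
    define B where "B = insert a J"
    have Bbr: "branching V E tail head B"
      unfolding branching_def
    proof (intro conjI ballI)
      show "B \<subseteq> E" using JE aE B_def by simp
      show "no_cycle tail head B" using ncJa B_def by simp
      fix v assume vV: "v \<in> V"
      show "card (B \<inter> delta E head v) \<le> 1"
      proof (cases "v = z")
        case True
        then have "B \<inter> delta E head v = {a}"
          using \<open>J \<inter> delta E head z = {}\<close> aE z_def B_def unfolding delta_def by auto
        then show ?thesis by simp
      next
        case False
        then have "B \<inter> delta E head v = J \<inter> delta E head v"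
          using z_def B_def unfolding delta_def by auto
        then show ?thesis using Jdeg vV by simp
      qed
    qed
    have BEC: "B \<subseteq> ECs V E head pref Cs" using JEC aEC B_def by simp
    have cB: "card (B \<inter> cset Cs i) = card (J \<inter> cset Cs i) + (if j \<le> i then 1 else 0)"
      if "i \<le> length Cs" for i
    proof -
      have "a \<in> cset Cs i \<longleftrightarrow> j \<le> i" using memC[OF aE that] levCa by simp
      then show ?thesis using card_insert_cond[OF finJ aJ, of "cset Cs i"] B_def by simp
    qed
    have "lex_less (count_vec Cs I) (count_vec Cs B)"
    proof (rule lex_better)
      show "\<forall>i. 1 \<le> i \<and> i < k \<longrightarrow> card (B \<inter> cset Cs i) = card (I \<inter> cset Cs i)"
      proof (intro allI impI)
        fix i assume i: "1 \<le> i \<and> i < k"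
        then have ip: "i \<le> length Cs" using kp by simp
        have c1: "card (J \<inter> cset Cs i) + (if j \<le> i \<and> i < k then 1 else 0) = card (I \<inter> cset Cs i)"
          using cnt[THEN spec[of _ i]] i by simp
        have c2: "card (B \<inter> cset Cs i) = card (J \<inter> cset Cs i) + (if j \<le> i then 1 else 0)"
          using cB[OF ip] .
        show "card (B \<inter> cset Cs i) = card (I \<inter> cset Cs i)"
          using c1 c2 i by simp
      qed
      have c1: "card (J \<inter> cset Cs k) + (if j \<le> k \<and> k < k then 1 else 0) = card (I \<inter> cset Cs k)"
        using cnt[THEN spec[of _ k]] k1 by simp
      have c2: "card (B \<inter> cset Cs k) = card (J \<inter> cset Cs k) + (if j \<le> k then 1 else 0)"
        using cB[OF kp] .
      show "card (I \<inter> cset Cs k) < card (B \<inter> cset Cs k)"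
        using c1 c2 jk by simp
    qed
    then show False using I_max Bbr BEC by blast
  next
    case False
    then obtain x where x: "x \<in> J" "head x = z" unfolding delta_def by blast
    have xE: "x \<in> E" using x JE by blast
    have xEC: "x \<in> ECs V E head pref Cs" using x JEC by blast
    have xa: "x \<noteq> a" using x aJ by blast
    have xA: "x \<notin> A"
    proof
      assume "x \<in> A"
      then have "{a, x} \<subseteq> A \<inter> delta E head z" using aA aE xE x z_def unfolding delta_def by auto
      moreover have "finite (A \<inter> delta E head z)" using finA by simp
      ultimately have "card {a, x} \<le> card (A \<inter> delta E head z)" by (rule card_mono[rotated])
      then show False using A_card[OF zV] xa by simp
    qed
    have aEDs: "a \<in> ECs V E head pref Ds" using aA A_EC by blast
    have "lev Ds x + lev Cs a \<le> lev Ds a + lev Cs x"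
      using lev_delta[OF wf chC chD xEC aEDs] x z_def by simp
    then have "lev Ds x \<le> lev Cs x" using levCa levDa by simp
    then have levx: "lev Ds x = lev Cs x" using lev_le[OF xE] by simp
    define j' where "j' = lev Cs x"
    have j'1: "1 \<le> j'" using lev_props'[OF chC xE] unfolding j'_def by simp
    have xCk: "x \<in> cset Cs k" using x(1) JCk by blast
    have j'k: "j' \<le> k" using memC[OF xE kp] xCk unfolding j'_def by simp
    define J' where "J' = insert a (J - {x})"
    have J'EC: "J' \<subseteq> ECs V E head pref Cs" unfolding J'_def using JEC aEC by blast
    have J'Ck: "J' \<subseteq> cset Cs k" unfolding J'_def using JCk aCk by blast
    have J'nc: "no_cycle tail head J'" by (rule no_cycle_subset[OF _ ncJa]) (unfold J'_def, blast)
    have J'deg: "\<forall>v\<in>V. card (J' \<inter> delta E head v) \<le> 1"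
    proof
      fix v assume vV: "v \<in> V"
      have finJ'v: "finite (J \<inter> delta E head v)" using finJ by simp
      show "card (J' \<inter> delta E head v) \<le> 1"
      proof (cases "v = z")
        case True
        have "J' \<inter> delta E head v \<subseteq> {a}"
        proof
          fix y assume y: "y \<in> J' \<inter> delta E head v"
          show "y \<in> {a}"
          proof (rule ccontr)
            assume "y \<notin> {a}"
            then have yJ: "y \<in> J" "y \<noteq> x" "head y = z" using y J'_def True unfolding delta_def by auto
            have "{x, y} \<subseteq> J \<inter> delta E head z" using yJ x JE unfolding delta_def by auto
            then have "card {x, y} \<le> card (J \<inter> delta E head z)"
              by (rule card_mono[rotated]) (use finJ in simp)
            moreover have "card (J \<inter> delta E head z) \<le> 1" using Jdeg zV by blast
            moreover have "card {x, y} = 2" using yJ(2) by simp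
            ultimately show False by simp
          qed
        qed
        then have "card (J' \<inter> delta E head v) \<le> card {a}" by (rule card_mono[rotated]) simp
        then show ?thesis by simp
      next
        case False
        then have "J' \<inter> delta E head v \<subseteq> J \<inter> delta E head v"
          using z_def J'_def unfolding delta_def by auto
        then have "card (J' \<inter> delta E head v) \<le> card (J \<inter> delta E head v)"
          by (rule card_mono[OF finJ'v])
        moreover have "card (J \<inter> delta E head v) \<le> 1" using Jdeg vV by blast
        ultimately show ?thesis by simp
      qed
    qed
    have aJx: "a \<notin> J - {x}" using aJ by blast
    have finJx: "finite (J - {x})" using finJ by simp
    have cJ': "card (J' \<inter> cset Cs i) + (if j' \<le> i then 1 else 0) = card (J \<inter> cset Cs i) + (if j \<le> i then 1 else 0)"
      if "i \<le> length Cs" for i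
    proof -
      have am: "a \<in> cset Cs i \<longleftrightarrow> j \<le> i" using memC[OF aE that] levCa by simp
      have xm: "x \<in> cset Cs i \<longleftrightarrow> j' \<le> i" using memC[OF xE that] j'_def by simp
      have "card (J' \<inter> cset Cs i) = card ((J - {x}) \<inter> cset Cs i) + (if j \<le> i then 1 else 0)"
        using card_insert_cond[OF finJx aJx, of "cset Cs i"] am J'_def by simp
      moreover have "card ((J - {x}) \<inter> cset Cs i) + (if j' \<le> i then 1 else 0) = card (J \<inter> cset Cs i)"
        using card_remove_cond[OF finJ x(1), of "cset Cs i"] xm by simp
      ultimately show ?thesis by simp
    qed
    have cnt': "\<forall>i. 1 \<le> i \<and> i \<le> k \<longrightarrow> card (J' \<inter> cset Cs i) + (if j' \<le> i \<and> i < k then 1 else 0) = card (I \<inter> cset Cs i)"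
    proof (intro allI impI)
      fix i assume i: "1 \<le> i \<and> i \<le> k"
      have ip: "i \<le> length Cs" using i kp by simp
      have e1: "card (J' \<inter> cset Cs i) + (if j' \<le> i then 1 else 0) = card (J \<inter> cset Cs i) + (if j \<le> i then 1 else 0)"
        using cJ'[OF ip] .
      have e2: "card (J \<inter> cset Cs i) + (if j \<le> i \<and> i < k then 1 else 0) = card (I \<inter> cset Cs i)"
        using cnt[THEN spec[of _ i]] i by simp
      show "card (J' \<inter> cset Cs i) + (if j' \<le> i \<and> i < k then 1 else 0) = card (I \<inter> cset Cs i)"
      proof (cases "i < k")
        case True then show ?thesis using e1 e2 by simp
      next
        case False
        then have "i = k" using i by simp
        then show ?thesis using e1 e2 jk j'k by simp
      qed
    qed
    have ins: "insert x J' = insert a J" unfolding J'_def using x(1) xa by blast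
    have xJ': "x \<notin> J'" unfolding J'_def using xa by blast
    have ncx: "\<not> conn tail head J' (tail x) (head x)"
    proof
      assume "conn tail head J' (tail x) (head x)"
      then have "\<not> no_cycle tail head (insert x J')" using xJ' by (rule conn_cycle)
      then show False using ins ncJa by simp
    qed
    have j'q: "j' \<le> length Ds" using j'k kp len by simp
    have xD: "x \<in> cset Ds j'" using lev_le_iff'[OF chD xE j'q] levx j'_def by simp
    have j'i: "j' - 1 < length Ds" using j'q j'1 by simp
    have csD: "cset Ds j' = Ds ! (j' - 1)" using j'1 unfolding cset_def by simp
    have spanx: "gspan E tail head (A \<inter> Ds ! (j' - 1)) = Ds ! (j' - 1)"
      using A_span[THEN spec[of _ "j' - 1"]] j'i by simp
    have finAD: "finite (A \<inter> Ds ! (j' - 1))" using finA by simp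
    have ncAD: "no_cycle tail head (A \<inter> Ds ! (j' - 1))" by (rule no_cycle_subset[OF _ A_nc]) blast
    have "x \<in> gspan E tail head (A \<inter> Ds ! (j' - 1))" using xD csD spanx by simp
    then have "conn tail head (A \<inter> Ds ! (j' - 1)) (tail x) (head x)"
      using gspan_char[OF finAD ncAD xE] by simp
    from conn_cross[OF this ncx] obtain a2 where
      a2: "a2 \<in> A \<inter> Ds ! (j' - 1)" "\<not> conn tail head J' (tail a2) (head a2)" by blast
    have a2A: "a2 \<in> A" using a2(1) by simp
    have a2D: "a2 \<in> cset Ds j'" using a2(1) csD by simp
    have J'E: "J' \<subseteq> E" using J'EC ECs_sub[of V E head pref Cs] by blast
    have cntlow: "\<forall>i. 1 \<le> i \<and> i < j' \<longrightarrow> card (J' \<inter> cset Cs i) = card (I \<inter> cset Cs i)"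
    proof (intro allI impI)
      fix i assume i: "1 \<le> i \<and> i < j'"
      then have "1 \<le> i \<and> i \<le> k" using j'k by simp
      then have "card (J' \<inter> cset Cs i) + (if j' \<le> i \<and> i < k then 1 else 0) = card (I \<inter> cset Cs i)"
        using cnt'[THEN spec[of _ i]] by simp
      then show "card (J' \<inter> cset Cs i) = card (I \<inter> cset Cs i)" using i by simp
    qed
    have levs: "lev Cs a2 = j' \<and> lev Ds a2 = j'"
      using tight_lemma[OF a2A j'1 j'k a2D J'E J'nc cntlow a2(2)] .
    have "J' \<inter> A = insert a (J \<inter> A)" unfolding J'_def using xA aA by blast
    moreover have "a \<notin> J \<inter> A" using aJ by blast
    moreover have "finite (J \<inter> A)" using finJ by simp
    ultimately have cA: "card (J' \<inter> A) = Suc (card (J \<inter> A))" by simp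
    have "card (J' \<inter> A) \<le> card A" using finA by (simp add: card_mono)
    then have "card A - card (J' \<inter> A) < n" using cA n_def by simp
    then show False
      by (rule less(1)[OF _ refl J'EC J'Ck J'nc J'deg a2A j'1 j'k _ _ a2(2) cnt']) (use levs in simp_all)
  qed
qed

end

context setting
begin

lemma X_facts:
  shows "I \<inter> cset Cs k \<subseteq> ECs V E head pref Cs" "I \<inter> cset Cs k \<subseteq> cset Cs k"
    "I \<inter> cset Cs k \<subseteq> E" "no_cycle tail head (I \<inter> cset Cs k)" "finite (I \<inter> cset Cs k)"
    "\<forall>v\<in>V. card ((I \<inter> cset Cs k) \<inter> delta E head v) \<le> 1"
proof -
  show "I \<inter> cset Cs k \<subseteq> ECs V E head pref Cs" using I_EC by blast
  show "I \<inter> cset Cs k \<subseteq> cset Cs k" by blast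
  show "I \<inter> cset Cs k \<subseteq> E" using I_sub by blast
  show "no_cycle tail head (I \<inter> cset Cs k)" using no_cycle_subset[OF _ I_nc] by blast
  show "finite (I \<inter> cset Cs k)" using I_sub finE finite_subset by blast
  show "\<forall>v\<in>V. card ((I \<inter> cset Cs k) \<inter> delta E head v) \<le> 1"
  proof
    fix v assume v: "v \<in> V"
    have fin: "finite (I \<inter> delta E head v)" using I_sub finE finite_subset by blast
    have "card ((I \<inter> cset Cs k) \<inter> delta E head v) \<le> card (I \<inter> delta E head v)"
      by (rule card_mono[OF fin]) blast
    moreover have "card (I \<inter> delta E head v) \<le> 1" using I_br v unfolding branching_def by blast
    ultimately show "card ((I \<inter> cset Cs k) \<inter> delta E head v) \<le> 1" by simp
  qed
qed

lemma X_low: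
  assumes "i \<le> k"
  shows "(I \<inter> cset Cs k) \<inter> cset Cs i = I \<inter> cset Cs i"
proof -
  have "cset Cs i \<subseteq> cset Cs k" using cset_mono[of Cs i k] chC assms kp unfolding chainE_def by blast
  then show ?thesis by blast
qed

lemma main_conn:
  assumes e: "e \<in> cset Ds k"
  shows "conn tail head (I \<inter> cset Cs k) (tail e) (head e)"
proof (rule ccontr)
  define X where "X = I \<inter> cset Cs k"
  assume nc0: "\<not> conn tail head (I \<inter> cset Cs k) (tail e) (head e)"
  then have nc: "\<not> conn tail head X (tail e) (head e)" using X_def by simp
  have kq: "k \<le> length Ds" using kp len by simp
  have ki: "k - 1 < length Ds" using kq k1 by simp
  have csD: "cset Ds k = Ds ! (k - 1)" using k1 unfolding cset_def by simp
  have eE: "e \<in> E" using cset_sub_E[OF chD kq] e by blast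
  have finAD: "finite (A \<inter> Ds ! (k - 1))" using finA by simp
  have ncAD: "no_cycle tail head (A \<inter> Ds ! (k - 1))" using no_cycle_subset[OF _ A_nc] by blast
  have "gspan E tail head (A \<inter> Ds ! (k - 1)) = Ds ! (k - 1)" using A_span ki by blast
  then have "e \<in> gspan E tail head (A \<inter> Ds ! (k - 1))" using e csD by simp
  then have "conn tail head (A \<inter> Ds ! (k - 1)) (tail e) (head e)"
    using gspan_char[OF finAD ncAD eE] by simp
  then obtain y where y: "y \<in> A \<inter> Ds ! (k - 1)" "\<not> conn tail head X (tail y) (head y)"
    using conn_cross[OF _ nc] by blast
  have yA: "y \<in> A" using y by blast
  have yD: "y \<in> cset Ds k" using y csD by simp
  have XEC: "X \<subseteq> ECs V E head pref Cs" and XCk: "X \<subseteq> cset Cs k" and XE: "X \<subseteq> E"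
    and Xnc: "no_cycle tail head X" and Xdeg: "\<forall>v\<in>V. card (X \<inter> delta E head v) \<le> 1"
    using X_facts unfolding X_def by simp_all
  have cntX: "\<forall>i. 1 \<le> i \<and> i \<le> k \<longrightarrow> card (X \<inter> cset Cs i) + (if k \<le> i \<and> i < k then 1 else 0) = card (I \<inter> cset Cs i)"
    using X_low X_def by simp
  have cntlow: "\<forall>i. 1 \<le> i \<and> i < k \<longrightarrow> card (X \<inter> cset Cs i) = card (I \<inter> cset Cs i)"
    using X_low X_def by simp
  have levs: "lev Cs y = k \<and> lev Ds y = k"
    using tight_lemma[OF yA k1 le_refl yD XE Xnc cntlow y(2)] .
  show False
    by (rule cascade[OF refl XEC XCk Xnc Xdeg yA k1 le_refl _ _ y(2) cntX]) (use levs in simp_all)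
qed

lemma main_span: "cset Ds k \<subseteq> gspan E tail head (I \<inter> cset Cs k)"
proof
  fix e assume e: "e \<in> cset Ds k"
  have kq: "k \<le> length Ds" using kp len by simp
  have eE: "e \<in> E" using cset_sub_E[OF chD kq] e by blast
  have "conn tail head (I \<inter> cset Cs k) (tail e) (head e)" using main_conn[OF e] .
  then show "e \<in> gspan E tail head (I \<inter> cset Cs k)"
    using gspan_char[OF X_facts(5) X_facts(4) eE] by simp
qed

lemma main_len:
  assumes kl: "k = length Cs" and lt: "card (I \<inter> cset Cs k) < grank tail head (cset Cs k)"
  shows "length Cs < length Ds"
proof (rule ccontr)
  assume "\<not> length Cs < length Ds"
  then have pq: "length Ds = length Cs" using len by simp
  have Dne: "Ds \<noteq> []" and Dl: "last Ds = E" using chD unfolding chainE_def by simp_all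
  have DE: "cset Ds k = E" using cset_last[OF Dne] Dl pq kl by simp
  have finCk: "finite (cset Cs k)" using cset_sub_E[OF chC kp] finE finite_subset by blast
  obtain F where F: "F \<subseteq> cset Cs k" "no_cycle tail head F" "card F = grank tail head (cset Cs k)"
    using grank_obtain[OF finCk] by blast
  have finF: "finite F" using F(1) finCk finite_subset by blast
  have "F \<subseteq> E" using F(1) cset_sub_E[OF chC kp] by blast
  then have "\<forall>f\<in>F. conn tail head (I \<inter> cset Cs k) (tail f) (head f)"
    using main_conn DE by blast
  then have "card F \<le> card (I \<inter> cset Cs k)"
    using exchange_card[OF X_facts(5) X_facts(4) finF F(2)] by blast
  then show False using F(3) lt by simp
qed

lemma prev_span:
  assumes "2 \<le> k" "e \<in> cset Cs (k - 1)"
  shows "e \<in> gspan E tail head (I \<inter> cset Cs k)"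
proof -
  have kp': "k - 1 \<le> length Cs" using kp by simp
  have eE: "e \<in> E" using cset_sub_E[OF chC kp'] assms(2) by blast
  have i1: "1 \<le> k - 1" "k - 1 < k" using assms(1) by simp_all
  have "card ((I \<inter> cset Cs k) \<inter> cset Cs (k - 1)) = card (I \<inter> cset Cs (k - 1))"
    using X_low[of "k - 1"] by simp
  then have "conn tail head (I \<inter> cset Cs k) (tail e) (head e)"
    using spanI[OF i1 X_facts(3) X_facts(4) _ assms(2)] by blast
  then show ?thesis using gspan_char[OF X_facts(5) X_facts(4) eE] by simp
qed

end

definition flat :: "'e set \<Rightarrow> ('e \<Rightarrow> 'v) \<Rightarrow> ('e \<Rightarrow> 'v) \<Rightarrow> 'e set \<Rightarrow> bool" where
  "flat E tail head S \<longleftrightarrow> S \<subseteq> E \<and> (\<forall>e\<in>E. conn tail head S (tail e) (head e) \<longrightarrow> e \<in> S)"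

definition invC :: "'e set \<Rightarrow> ('e \<Rightarrow> 'v) \<Rightarrow> ('e \<Rightarrow> 'v) \<Rightarrow> 'e set list \<Rightarrow> 'e set list \<Rightarrow> bool" where
  "invC E tail head Ds Cs \<longleftrightarrow> chainE Cs E \<and> (\<forall>i<length Cs. flat E tail head (Cs ! i)) \<and>
     length Cs \<le> length Ds \<and> (\<forall>i<length Cs. Ds ! i \<subseteq> Cs ! i)"

lemma flat_E: "flat E tail head E"
  unfolding flat_def by blast

lemma flat_gspan:
  assumes "finite X" "no_cycle tail head X"
  shows "flat E tail head (gspan E tail head X)"
  unfolding flat_def
proof (intro conjI ballI impI)
  show "gspan E tail head X \<subseteq> E" unfolding gspan_def by blast
  fix e assume e: "e \<in> E" and c: "conn tail head (gspan E tail head X) (tail e) (head e)"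
  have "conn tail head X (tail e) (head e)"
  proof (rule conn_lift[OF _ c])
    fix s assume s: "s \<in> gspan E tail head X"
    then have "s \<in> E" unfolding gspan_def by blast
    then show "conn tail head X (tail s) (head s)" using gspan_char[OF assms \<open>s \<in> E\<close>] s by simp
  qed
  then show "e \<in> gspan E tail head X" using gspan_char[OF assms e] by simp
qed

lemma inv_init:
  assumes "chainE Ds E"
  shows "invC E tail head Ds [E]"
proof -
  have Dne: "Ds \<noteq> []" using assms unfolding chainE_def by simp
  have "chainE [E] E" unfolding chainE_def multichain_def by simp
  moreover have "Ds ! 0 \<subseteq> E" using chain_sub_E[of Ds E 0] assms Dne unfolding chainE_def by simp
  ultimately show ?thesis unfolding invC_def using flat_E Dne by (simp add: Suc_leI)
qed

lemma inv_step:
  assumes wf: "digraph_wf V r E tail head pref"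
    and A_arb: "arborescence V E tail head A"
    and A_EC: "A \<subseteq> ECs V E head pref Ds"
    and A_span: "\<forall>i < length Ds. gspan E tail head (A \<inter> Ds ! i) = Ds ! i"
    and chD: "chainE Ds E"
    and inv: "invC E tail head Ds Cs"
    and st: "alg_step V E tail head pref Cs Cs'"
  shows "invC E tail head Ds Cs'"
proof -
  have chC: "chainE Cs E" and flC: "\<forall>i<length Cs. flat E tail head (Cs ! i)"
    and len: "length Cs \<le> length Ds" and DC: "\<forall>i<length Cs. Ds ! i \<subseteq> Cs ! i"
    using inv unfolding invC_def by simp_all
  obtain I k where lm: "lexmax_branching V E tail head pref Cs I"
    and k1: "1 \<le> k" and kp: "k \<le> length Cs"
    and def: "card (I \<inter> cset Cs k) < grank tail head (cset Cs k)"
    and tI: "\<forall>i. 1 \<le> i \<and> i < k \<longrightarrow> card (I \<inter> cset Cs i) = grank tail head (cset Cs i)"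
    and Cs': "Cs' = (let Cs1 = Cs[k - 1 := gspan E tail head (I \<inter> cset Cs k)]
               in if k = length Cs then Cs1 @ [E] else Cs1)"
    using st unfolding alg_step_def by blast
  have I_br: "branching V E tail head I" and I_EC: "I \<subseteq> ECs V E head pref Cs"
    and I_max: "\<forall>J. branching V E tail head J \<and> J \<subseteq> ECs V E head pref Cs \<longrightarrow>
                    \<not> lex_less (count_vec Cs I) (count_vec Cs J)"
    using lm unfolding lexmax_branching_def by blast+
  interpret S: setting V r E tail head pref A Ds Cs I k
    by (unfold_locales; fact)
  define X where "X = I \<inter> cset Cs k"
  define N where "N = gspan E tail head X"
  define Cs1 where "Cs1 = Cs[k - 1 := N]"
  have Cs'1: "Cs' = (if k = length Cs then Cs1 @ [E] else Cs1)" using Cs' Cs1_def N_def X_def by simp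
  have finX: "finite X" and ncX: "no_cycle tail head X" and XE: "X \<subseteq> E"
    using S.X_facts X_def by simp_all
  have flN: "flat E tail head N" using flat_gspan[OF finX ncX] N_def by simp
  have NE: "N \<subseteq> E" using flN unfolding flat_def by blast
  have DN: "Ds ! (k - 1) \<subseteq> N"
    using S.main_span k1 unfolding N_def X_def cset_def by simp
  have prev: "Cs ! (k - 2) \<subseteq> N" if "2 \<le> k"
  proof
    fix e assume "e \<in> Cs ! (k - 2)"
    then have "e \<in> cset Cs (k - 1)" using that unfolding cset_def by (simp add: numeral_2_eq_2)
    then show "e \<in> N" using S.prev_span[OF that] unfolding N_def X_def by simp
  qed
  have next1: "N \<subseteq> Cs ! k" if "k < length Cs"
  proof
    fix e assume e: "e \<in> N"
    have fl: "flat E tail head (Cs ! k)" using flC that by blast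
    have eE: "e \<in> E" using e NE by blast
    have cX: "conn tail head X (tail e) (head e)" using e gspan_char[OF finX ncX eE] unfolding N_def by simp
    have XCk: "X \<subseteq> Cs ! k"
    proof -
      have sk: "Suc (k - 1) < length Cs" using that k1 by simp
      have "Cs ! (k - 1) \<subseteq> Cs ! Suc (k - 1)"
        using chC sk unfolding chainE_def multichain_def by blast
      then have "Cs ! (k - 1) \<subseteq> Cs ! k" using k1 by simp
      then show ?thesis unfolding X_def cset_def using k1 by auto
    qed
    have "conn tail head (Cs ! k) (tail e) (head e)" by (rule conn_mono[OF XCk cX])
    then show "e \<in> Cs ! k" using fl eE unfolding flat_def by blast
  qed
  have lenCs1: "length Cs1 = length Cs" using Cs1_def by simp
  have Cs1nth: "Cs1 ! i = (if i = k - 1 then N else Cs ! i)" if "i < length Cs" for i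
    using that Cs1_def k1 kp by simp
  have chainCs: "multichain Cs" "Cs \<noteq> []" "last Cs = E" using chC unfolding chainE_def by simp_all
  show ?thesis
  proof (cases "k = length Cs")
    case True
    have C': "Cs' = Cs1 @ [E]" using Cs'1 True by simp
    have lt: "length Cs < length Ds" using S.main_len[OF True def] .
    have nth': "Cs' ! i = (if i = k - 1 then N else if i < length Cs then Cs ! i else E)"
      if "i < length Cs'" for i
      using that C' Cs1nth lenCs1 k1 kp by (auto simp: nth_append)
    have lenC': "length Cs' = Suc (length Cs)" using C' lenCs1 by simp
    have mc: "multichain Cs'"
      unfolding multichain_def
    proof (intro allI impI)
      fix i assume i: "Suc i < length Cs'"
      show "Cs' ! i \<subseteq> Cs' ! Suc i"
      proof -
        consider "i = k - 1" | "Suc i = k - 1" | "i \<noteq> k - 1" "Suc i \<noteq> k - 1" by blast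
        then show ?thesis
        proof cases
          case 1
          then have "Suc i = length Cs" using True k1 by simp
          then show ?thesis using nth' i 1 NE by simp
        next
          case 2
          then have k2: "2 \<le> k" and ii: "i = k - 2" by simp_all
          have il: "i < length Cs" using ii kp k2 by simp
          have "Cs' ! i = Cs ! i" using nth' i il 2 by simp
          moreover have "Cs' ! Suc i = N" using nth' i 2 by simp
          ultimately show ?thesis using prev[OF k2] ii by simp
        next
          case 3
          have "Suc i < length Cs" using i lenC' 3 True k1 by simp
          then show ?thesis using nth' i 3 chainCs(1) unfolding multichain_def by simp
        qed
      qed
    qed
    have "chainE Cs' E" unfolding chainE_def using mc C' by simp
    moreover have "\<forall>i<length Cs'. flat E tail head (Cs' ! i)"
      using nth' flN flC flat_E[of E tail head] by simp
    moreover have "length Cs' \<le> length Ds" using lenC' lt by simp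
    moreover have "\<forall>i<length Cs'. Ds ! i \<subseteq> Cs' ! i"
    proof (intro allI impI)
      fix i assume i: "i < length Cs'"
      show "Ds ! i \<subseteq> Cs' ! i"
      proof (cases "i = k - 1")
        case True then show ?thesis using nth'[OF i] DN by simp
      next
        case False
        show ?thesis
        proof (cases "i < length Cs")
          case True then show ?thesis using nth'[OF i] DC False by simp
        next
          case F2: False
          then have "i = length Cs" using i lenC' by simp
          then have "i < length Ds" using lt by simp
          then have "Ds ! i \<subseteq> E" using chain_sub_E[of Ds E i] chD unfolding chainE_def by simp
          then show ?thesis using nth'[OF i] False F2 by simp
        qed
      qed
    qed
    ultimately show ?thesis unfolding invC_def by blast
  next
    case False
    have C': "Cs' = Cs1" using Cs'1 False by simp
    have kl: "k < length Cs" using False kp by simp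
    have mc: "multichain Cs'"
      unfolding multichain_def
    proof (intro allI impI)
      fix i assume i: "Suc i < length Cs'"
      then have i': "Suc i < length Cs" using C' lenCs1 by simp
      consider "i = k - 1" | "Suc i = k - 1" | "i \<noteq> k - 1" "Suc i \<noteq> k - 1" by blast
      then show "Cs' ! i \<subseteq> Cs' ! Suc i"
      proof cases
        case 1
        then have "Suc i = k" using k1 by simp
        then show ?thesis using C' Cs1nth i' 1 next1[OF kl] by simp
      next
        case 2
        then have k2: "2 \<le> k" and ii: "i = k - 2" by simp_all
        have "Cs' ! i = Cs ! i" using C' Cs1nth i' 2 by simp
        moreover have "Cs' ! Suc i = N" using C' Cs1nth i' 2 by simp
        ultimately show ?thesis using prev[OF k2] ii by simp
      next
        case 3
        then show ?thesis using C' Cs1nth i' chainCs(1) unfolding multichain_def by simp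
      qed
    qed
    have lastC: "last Cs' = E"
    proof -
      have "Cs' ! (length Cs - 1) = Cs ! (length Cs - 1)"
      proof -
        have ne: "length Cs - 1 \<noteq> k - 1" using kl k1 by arith
        have "length Cs - 1 < length Cs" using kl by simp
        then show ?thesis using C' Cs1nth[of "length Cs - 1"] ne by simp
      qed
      moreover have "Cs1 \<noteq> []" using lenCs1 chainCs(2) by auto
      ultimately show ?thesis using C' lenCs1 chainCs by (simp add: last_conv_nth)
    qed
    have "chainE Cs' E" unfolding chainE_def using mc lastC C' lenCs1 chainCs(2) by auto
    moreover have "\<forall>i<length Cs'. flat E tail head (Cs' ! i)"
      using C' Cs1nth lenCs1 flN flC by simp
    moreover have "length Cs' \<le> length Ds" using C' lenCs1 len by simp
    moreover have "\<forall>i<length Cs'. Ds ! i \<subseteq> Cs' ! i"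
      using C' Cs1nth lenCs1 DN DC by simp
    ultimately show ?thesis unfolding invC_def by blast
  qed
qed

theorem lemma3p1:
  fixes V :: "'v set" and r :: 'v and E :: "'e set"
    and tail head :: "'e \<Rightarrow> 'v" and pref :: "'v \<Rightarrow> 'e \<Rightarrow> 'e \<Rightarrow> bool"
    and A :: "'e set" and Ds Cs :: "'e set list"
  assumes "digraph_wf V r E tail head pref"
    and "popular V E tail head pref A"
    and "Ds \<noteq> []" and "Ds ! 0 \<noteq> {}" and "strict_chain Ds" and "last Ds = E"
    and "A \<subseteq> ECs V E head pref Ds"
    and "\<forall>i < length Ds. gspan E tail head (A \<inter> Ds ! i) = Ds ! i"
    and "alg_reach V E tail head pref Cs"
  shows "length Cs \<le> length Ds \<and> (\<forall>i < length Cs. Ds ! i \<subseteq> Cs ! i)"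
proof -
  have chD: "chainE Ds E" unfolding chainE_def using strict_chain_multichain[OF assms(5)] assms(3,6) by simp
  have arb: "arborescence V E tail head A" using assms(2) unfolding popular_def by simp
  have "invC E tail head Ds Cs" using assms(9)
  proof (induct rule: alg_reach.induct)
    case init
    show ?case by (rule inv_init[OF chD])
  next
    case (step Cs Cs')
    show ?case by (rule inv_step[OF assms(1) arb assms(7) assms(8) chD step(2) step(3)])
  qed
  then show ?thesis unfolding invC_def by simp
qed

end
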